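(* Let $K\subset\mathbb{R}^d$ be a convex body (not necessarily centrally symmetric) with parameter of asymmetry $\sigma$. Let $\mathcal{K}=\{o_i+\tau_iK : i=1,\dots,n\}$ with $o_i\in\mathbb{R}^d$ and $\tau_1,\dots,\tau_n>0$ be a non-separable family of positive homothetic copies of $K$. Then there is a translate of $\frac{\sigma+1}{2}\left(\sum_{i=1}^n\tau_i\right)K$ that covers $\bigcup\mathcal{K}$.
   Context: A convex body is a compact convex set with nonempty interior. A family $\mathcal{K}$ of convex bodies in $\mathbb{R}^d$ is called non-separable if every hyperplane $H$ that intersects $\operatorname{conv}\bigcup\mathcal{K}$ intersects some member of $\mathcal{K}$. For a convex body $K$, the parameter of asymmetry is $\sigma=\min_{q\in\operatorname{int}K}\min\{\mu>0 : (K-q)\subset-\mu(K-q)\}$. Equivalently, it is $\min_{q\in\operatorname{int}K}\min\{\mu>0:(K-q)^\circ\subset-\mu(K-q)^\circ\}$, where $L^\circ=\{p:\langle p,x\rangle\le1\ \forall x\in L\}$ denotes the polar body. *)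

theory Defs
  imports "HOL-Analysis.Analysis"
begin

definition convex_body :: "'a::euclidean_space set \<Rightarrow> bool" where
  "convex_body K \<longleftrightarrow> compact K \<and> convex K \<and> interior K \<noteq> {}"

definition hyperplane :: "'a::euclidean_space set \<Rightarrow> bool" where
  "hyperplane H \<longleftrightarrow> (\<exists>a b. a \<noteq> 0 \<and> H = {x. a \<bullet> x = b})"

definition non_separable :: "'a::euclidean_space set set \<Rightarrow> bool" where
  "non_separable F \<longleftrightarrow>
     (\<forall>H. hyperplane H \<and> H \<inter> convex hull (\<Union>F) \<noteq> {} \<longrightarrow> (\<exists>C\<in>F. H \<inter> C \<noteq> {}))"

definition asymmetry :: "'a::euclidean_space set \<Rightarrow> real" where
  "asymmetry K = (INF q\<in>interior K.
      Inf {\<mu>::real. \<mu> > 0 \<and> (\<lambda>x. x - q) ` K \<subseteq> (\<lambda>x. - \<mu> *\<^sub>R (x - q)) ` K})"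

end

theory Submission
  imports Defs
begin

lemma cover_len:
  fixes x y :: real and s e :: "nat \<Rightarrow> real" and F :: "nat set"
  assumes "finite F" "x \<le> y" "{x<..<y} \<subseteq> (\<Union>j\<in>F. {s j..e j})" "\<And>j. j\<in>F \<Longrightarrow> s j \<le> e j"
  shows "y - x \<le> (\<Sum>j\<in>F. e j - s j)"
proof -
  have "y - x = measure lborel {x<..<y}" using assms(2) by simp
  also have "\<dots> \<le> measure lborel (\<Union>j\<in>F. {s j..e j})"
  proof (rule measure_mono_fmeasurable[OF assms(3)])
    show "{x<..<y} \<in> sets lborel" by simp
    show "(\<Union>j\<in>F. {s j..e j}) \<in> fmeasurable lborel"
      by (intro fmeasurable.finite_UN assms(1)) (metis box_real(2) fmeasurable_cbox)
  qed
  also have "\<dots> \<le> (\<Sum>j\<in>F. measure lborel {s j..e j})"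
    by (rule measure_UNION_le[OF assms(1)]) simp
  also have "\<dots> = (\<Sum>j\<in>F. e j - s j)" using assms(4) by simp
  finally show ?thesis .
qed
lemma aux_lin: "(x::real) = 2*a + c \<Longrightarrow> q \<le> c \<Longrightarrow> 2*a \<le> x - q" by linarith

lemma pair_sum:
  fixes r w :: "nat \<Rightarrow> real" and I :: "nat set"
  assumes "finite I" "\<And>i. i \<in> I \<Longrightarrow> w i \<ge> 0"
  shows "2 * (\<Sum>i\<in>I. \<Sum>j\<in>I. if r i < r j then w i * w j else 0)
     \<le> (\<Sum>i\<in>I. w i)^2 - (\<Sum>i\<in>I. (w i)^2)"
proof -
  let ?A = "\<Sum>i\<in>I. \<Sum>j\<in>I. if r i < r j then w i * w j else 0"
  let ?B = "\<Sum>i\<in>I. \<Sum>j\<in>I. if r j < r i then w i * w j else 0"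
  let ?C = "\<Sum>i\<in>I. \<Sum>j\<in>I. if r i = r j then w i * w j else 0"
  have sq: "(\<Sum>i\<in>I. w i)^2 = (\<Sum>i\<in>I. \<Sum>j\<in>I. w i * w j)"
    by (simp add: power2_eq_square sum_product)
  have X: "(\<Sum>i\<in>I. \<Sum>j\<in>I. w i * w j) = ?A + ?B + ?C"
  proof -
    have "\<And>i j. w i * w j = (if r i < r j then w i * w j else 0) + (if r j < r i then w i * w j else 0) + (if r i = r j then w i * w j else 0)"
      by auto
    then have "(\<Sum>i\<in>I. \<Sum>j\<in>I. w i * w j) = (\<Sum>i\<in>I. \<Sum>j\<in>I. (if r i < r j then w i * w j else 0) + (if r j < r i then w i * w j else 0) + (if r i = r j then w i * w j else 0))"
      by (intro sum.cong refl) blast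
    then show ?thesis by (simp only: sum.distrib)
  qed
  have Y: "?B = ?A"
    by (subst sum.swap) (intro sum.cong refl, simp add: mult.commute)
  have Z: "?C \<ge> (\<Sum>i\<in>I. (w i)^2)"
  proof (rule sum_mono)
    fix i assume i: "i \<in> I"
    have "(\<lambda>j. if r i = r j then w i * w j else 0) i \<le> (\<Sum>j\<in>I. if r i = r j then w i * w j else 0)"
      by (rule member_le_sum[OF i]) (use assms i in auto)
    then show "(w i)^2 \<le> (\<Sum>j\<in>I. if r i = r j then w i * w j else 0)"
      by (simp add: power2_eq_square)
  qed
  have "(\<Sum>i\<in>I. w i)^2 = 2 * ?A + ?C" unfolding sq X Y by (simp only: mult_2)
  then show ?thesis using Z by (rule aux_lin)
qed


lemma arith_final:
  fixes T Q P S al be sg X :: real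
  assumes "0 \<le> al" "be \<le> sg * al" "1 \<le> sg" "0 \<le> Q" "0 \<le> P" "2 * P \<le> T^2 - Q"
    "X \<le> (al + be) * P + al * Q"
  shows "X \<le> (sg + 1) / 2 * T^2 * al"
proof -
  have h1: "(al + be) * P \<le> ((1 + sg) * al) * P" using assms by (intro mult_right_mono) (auto simp: algebra_simps)
  have h2: "((1 + sg) * al) * P \<le> ((1 + sg) * al) * ((T^2 - Q)/2)"
    using assms by (intro mult_left_mono) auto
  have h3: "al * Q \<le> ((1+sg)/2 * al) * Q" using assms mult_left_mono[OF assms(3) assms(1)] by (intro mult_right_mono) (auto simp: algebra_simps)
  have "X \<le> ((1 + sg) * al) * ((T^2 - Q)/2) + ((1+sg)/2 * al) * Q" using h1 h2 h3 assms(7) by linarith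
  also have "\<dots> = (sg + 1) / 2 * T^2 * al" by (simp add: field_simps)
  finally show ?thesis .
qed

lemma real_core:
  fixes a \<tau> :: "nat \<Rightarrow> real" and I :: "nat set" and al be sg :: real
  assumes fin: "finite I" and ne: "I \<noteq> {}" and tau: "\<And>i. i \<in> I \<Longrightarrow> \<tau> i > 0"
    and al: "0 \<le> al" and be: "0 \<le> be" "be \<le> sg * al" and sg: "1 \<le> sg"
    and cover: "\<And>i b. i \<in> I \<Longrightarrow> a i + \<tau> i * al < b \<Longrightarrow> b < Max ((\<lambda>j. a j + \<tau> j * al) ` I) \<Longrightarrow>
        \<exists>j\<in>I. a j + \<tau> j * al - \<tau> j * (al + be) \<le> b \<and> b \<le> a j + \<tau> j * al"
    and i: "i \<in> I"
  shows "(\<Sum>j\<in>I. \<tau> j) * (a i + \<tau> i * al) - (\<Sum>j\<in>I. \<tau> j * a j) \<le> (sg + 1) / 2 * (\<Sum>j\<in>I. \<tau> j)^2 * al"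
proof -
  define r where "r j = a j + \<tau> j * al" for j
  define R where "R = Max (r ` I)"
  define T where "T = (\<Sum>j\<in>I. \<tau> j)"
  define Q where "Q = (\<Sum>j\<in>I. (\<tau> j)^2)"
  define P where "P = (\<Sum>k\<in>I. \<Sum>j\<in>I. if r k < r j then \<tau> k * \<tau> j else 0)"
  have rR: "k \<in> I \<Longrightarrow> r k \<le> R" for k unfolding R_def using fin by auto
  have len: "R - r k \<le> (\<Sum>j\<in>I. if r k < r j then \<tau> j * (al + be) else 0)" if k: "k \<in> I" for k
  proof -
    have "R - r k \<le> (\<Sum>j\<in>{j\<in>I. r k < r j}. r j - (r j - \<tau> j * (al + be)))"
    proof (rule cover_len)
      show "finite {j\<in>I. r k < r j}" using fin by simp
      show "r k \<le> R" using rR k .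
      show "{r k<..<R} \<subseteq> (\<Union>j\<in>{j\<in>I. r k < r j}. {r j - \<tau> j * (al + be)..r j})"
      proof
        fix b assume "b \<in> {r k<..<R}"
        then obtain j where "j \<in> I" "r j - \<tau> j * (al + be) \<le> b" "b \<le> r j"
          using cover[OF k, of b] unfolding r_def R_def by auto
        then show "b \<in> (\<Union>j\<in>{j\<in>I. r k < r j}. {r j - \<tau> j * (al + be)..r j})"
          using \<open>b \<in> {r k<..<R}\<close> by auto
      qed
      show "r j - \<tau> j * (al + be) \<le> r j" if "j \<in> {j\<in>I. r k < r j}" for j
        using tau[of j] that al be by auto
    qed
    also have "\<dots> = (\<Sum>j\<in>{j\<in>I. r k < r j}. \<tau> j * (al + be))" by simp
    also have "\<dots> = (\<Sum>j\<in>I. if r k < r j then \<tau> j * (al + be) else 0)"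
      using fin by (simp add: sum.inter_filter)
    finally show ?thesis .
  qed
  have S1: "(\<Sum>k\<in>I. \<tau> k * (R - r k)) \<le> (al + be) * P"
  proof -
    have "(\<Sum>k\<in>I. \<tau> k * (R - r k)) \<le> (\<Sum>k\<in>I. \<tau> k * (\<Sum>j\<in>I. if r k < r j then \<tau> j * (al + be) else 0))"
      by (intro sum_mono mult_left_mono len) (use tau in \<open>auto intro: less_imp_le\<close>)
    also have "\<dots> = (al + be) * P" unfolding P_def
      by (simp add: sum_distrib_left sum_distrib_right if_distrib mult_ac cong: if_cong)
    finally show ?thesis .
  qed
  have P2: "2 * P \<le> T^2 - Q" unfolding P_def T_def Q_def
    by (rule pair_sum[OF fin]) (use tau in \<open>auto intro: less_imp_le\<close>)
  have P0: "0 \<le> P" unfolding P_def by (intro sum_nonneg) (use tau in \<open>auto intro: less_imp_le\<close>)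
  have Q0: "0 \<le> Q" unfolding Q_def by (intro sum_nonneg) auto
  have X: "T * r i - (\<Sum>j\<in>I. \<tau> j * a j) \<le> (al + be) * P + al * Q"
  proof -
    have "T * r i - (\<Sum>j\<in>I. \<tau> j * a j) = (\<Sum>j\<in>I. \<tau> j * (r i - a j))"
    proof -
      have "T * r i = (\<Sum>j\<in>I. \<tau> j * r i)" unfolding T_def by (rule sum_distrib_right)
      then show ?thesis by (simp add: sum_subtractf right_diff_distrib)
    qed
    also have "\<dots> \<le> (\<Sum>j\<in>I. \<tau> j * (R - a j))"
      by (intro sum_mono mult_left_mono) (use tau rR i in \<open>auto intro: less_imp_le\<close>)
    also have "\<dots> = (\<Sum>j\<in>I. \<tau> j * (R - r j)) + al * Q"
      unfolding Q_def r_def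
      by (simp add: sum_distrib_left sum.distrib[symmetric] algebra_simps power2_eq_square)
    finally show ?thesis using S1 by linarith
  qed
  have "T * r i - (\<Sum>j\<in>I. \<tau> j * a j) \<le> (sg + 1) / 2 * T^2 * al"
    by (rule arith_final[OF al be(2) sg Q0 P0 P2 X])
  then show ?thesis unfolding T_def r_def .
qed


lemma main_geom:
  fixes K :: "'a::euclidean_space set" and q :: 'a and sg :: real
    and c :: "nat \<Rightarrow> 'a" and \<tau> :: "nat \<Rightarrow> real" and n :: nat
  assumes cK: "compact K" and vK: "convex K" and qK: "q \<in> K" and sg: "1 \<le> sg"
    and sym: "\<And>x. x \<in> K \<Longrightarrow> \<exists>z\<in>K. x - q = - sg *\<^sub>R (z - q)"
    and tau: "\<And>i. i \<in> {1..n} \<Longrightarrow> \<tau> i > 0" and n1: "1 \<le> n"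
    and ns: "non_separable {(\<lambda>x. c i + \<tau> i *\<^sub>R x) ` K | i. i \<in> {1..n}}"
  shows "\<exists>t. (\<Union>i\<in>{1..n}. (\<lambda>x. c i + \<tau> i *\<^sub>R x) ` K)
             \<subseteq> (\<lambda>x. t + ((sg + 1) / 2 * (\<Sum>i=1..n. \<tau> i)) *\<^sub>R x) ` K"
proof -
  define I where "I = {1..n}"
  define T where "T = (\<Sum>i\<in>I. \<tau> i)"
  define L where "L = (sg + 1) / 2 * T"
  define t' where "t' = (1 / T) *\<^sub>R (\<Sum>j\<in>I. \<tau> j *\<^sub>R (c j + \<tau> j *\<^sub>R q))"
  define t where "t = t' - L *\<^sub>R q"
  have fin: "finite I" and neI: "I \<noteq> {}" unfolding I_def using n1 by auto
  have tauI: "\<And>i. i \<in> I \<Longrightarrow> \<tau> i > 0" using tau unfolding I_def .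
  have T0: "T > 0" unfolding T_def using fin neI tauI by (simp add: sum_pos)
  have Kne: "K \<noteq> {}" using qK by auto
  define C where "C = (\<lambda>x. t + L *\<^sub>R x) ` K"
  have convC: "convex C" unfolding C_def by (rule convex_affinity[OF vK])
  have closC: "closed C" unfolding C_def by (rule compact_imp_closed[OF compact_affinity[OF cK]])
  have key: "p \<in> C" if i: "i \<in> I" and y: "y \<in> K" and p: "p = c i + \<tau> i *\<^sub>R y" for i y p
  proof (rule ccontr)
    assume "p \<notin> C"
    from separating_hyperplane_closed_point[OF convC closC this]
    obtain a b where ab: "inner a p < b" "\<forall>x\<in>C. b < inner a x" by blast
    define u where "u = - a"
    have sep: "\<And>x. x \<in> C \<Longrightarrow> inner u x < inner u p" unfolding u_def using ab by force
    have cont: "continuous_on K (\<lambda>y. inner u y)" by (intro continuous_intros)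
    obtain ymax where ymax: "ymax \<in> K" "\<And>y. y \<in> K \<Longrightarrow> inner u y \<le> inner u ymax"
      using continuous_attains_sup[OF cK Kne cont] by blast
    obtain ymin where ymin: "ymin \<in> K" "\<And>y. y \<in> K \<Longrightarrow> inner u ymin \<le> inner u y"
      using continuous_attains_inf[OF cK Kne cont] by blast
    define al where "al = inner u (ymax - q)"
    define be where "be = inner u (q - ymin)"
    define aa where "aa j = inner u (c j + \<tau> j *\<^sub>R q)" for j
    have al0: "0 \<le> al" unfolding al_def using ymax(2)[OF qK] by (simp add: inner_diff_right)
    have be0: "0 \<le> be" unfolding be_def using ymin(2)[OF qK] by (simp add: inner_diff_right)
    have besg: "be \<le> sg * al"
    proof -
      obtain z where z: "z \<in> K" "ymin - q = - sg *\<^sub>R (z - q)" using sym[OF ymin(1)] by blast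
      have "be = sg * inner u (z - q)" unfolding be_def
        using arg_cong[OF z(2), of "inner u"] by (simp add: inner_diff_right algebra_simps)
      also have "\<dots> \<le> sg * al" unfolding al_def using ymax(2)[OF z(1)] sg
        by (intro mult_left_mono) (auto simp: inner_diff_right)
      finally show ?thesis .
    qed
    have r_eq: "inner u (c j + \<tau> j *\<^sub>R ymax) = aa j + \<tau> j * al" for j
      unfolding aa_def al_def by (simp add: inner_add_right inner_diff_right algebra_simps)
    have l_eq: "inner u (c j + \<tau> j *\<^sub>R ymin) = aa j + \<tau> j * al - \<tau> j * (al + be)" for j
      unfolding aa_def al_def be_def by (simp add: inner_add_right inner_diff_right algebra_simps)
    have cover: "\<exists>j\<in>I. aa j + \<tau> j * al - \<tau> j * (al + be) \<le> b \<and> b \<le> aa j + \<tau> j * al"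
      if k: "k \<in> I" and b1: "aa k + \<tau> k * al < b" and b2: "b < Max ((\<lambda>j. aa j + \<tau> j * al) ` I)" for k b
    proof -
      have "Max ((\<lambda>j. aa j + \<tau> j * al) ` I) \<in> (\<lambda>j. aa j + \<tau> j * al) ` I"
        by (rule Max_in) (use fin neI in auto)
      then obtain m where m: "m \<in> I" "aa m + \<tau> m * al = Max ((\<lambda>j. aa j + \<tau> j * al) ` I)"
        by (metis (no_types, lifting) imageE)
      define p1 where "p1 = c k + \<tau> k *\<^sub>R ymax"
      define p2 where "p2 = c m + \<tau> m *\<^sub>R ymax"
      have v1: "inner u p1 < b" and v2: "b < inner u p2"
        using b1 b2 m r_eq unfolding p1_def p2_def by auto
      have U1: "p1 \<in> \<Union>{(\<lambda>x. c i + \<tau> i *\<^sub>R x) ` K | i. i \<in> {1..n}}"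
        using k ymax(1) unfolding p1_def I_def by blast
      have U2: "p2 \<in> \<Union>{(\<lambda>x. c i + \<tau> i *\<^sub>R x) ` K | i. i \<in> {1..n}}"
        using m(1) ymax(1) unfolding p2_def I_def by blast
      note H1 = hull_subset[THEN subsetD, OF U1, of convex]
      note H2 = hull_subset[THEN subsetD, OF U2, of convex]
      define th where "th = (b - inner u p1) / (inner u p2 - inner u p1)"
      have th0: "0 \<le> th" "th \<le> 1" unfolding th_def using v1 v2 by (auto simp: divide_simps)
      define x where "x = (1 - th) *\<^sub>R p1 + th *\<^sub>R p2"
      have xin: "x \<in> convex hull (\<Union>{(\<lambda>x. c i + \<tau> i *\<^sub>R x) ` K | i. i \<in> {1..n}})"
        unfolding x_def
        by (rule convexD[OF convex_convex_hull H1 H2]) (use th0 in auto)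
      have xb: "inner u x = b"
      proof -
        have "inner u x = inner u p1 + th * (inner u p2 - inner u p1)"
          unfolding x_def by (simp add: inner_add_right algebra_simps)
        also have "\<dots> = b" unfolding th_def using v1 v2 by simp
        finally show ?thesis .
      qed
      have u0: "u \<noteq> 0" using v1 v2 by auto
      have hyp: "hyperplane {x. inner u x = b}" unfolding hyperplane_def using u0 by blast
      have "{x. inner u x = b} \<inter> convex hull (\<Union>{(\<lambda>x. c i + \<tau> i *\<^sub>R x) ` K | i. i \<in> {1..n}}) \<noteq> {}"
        using xin xb by blast
      then obtain D where D: "D \<in> {(\<lambda>x. c i + \<tau> i *\<^sub>R x) ` K | i. i \<in> {1..n}}"
          "{x. inner u x = b} \<inter> D \<noteq> {}"
        using ns hyp unfolding non_separable_def by blast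
      then obtain j w where j: "j \<in> I" "w \<in> K" "inner u (c j + \<tau> j *\<^sub>R w) = b"
        unfolding I_def by blast
      have tj: "\<tau> j > 0" using tauI[OF j(1)] .
      have m1: "\<tau> j * inner u w \<le> \<tau> j * inner u ymax"
        using ymax(2)[OF j(2)] tj by (intro mult_left_mono) auto
      have m2: "\<tau> j * inner u ymin \<le> \<tau> j * inner u w"
        using ymin(2)[OF j(2)] tj by (intro mult_left_mono) auto
      have "b \<le> aa j + \<tau> j * al"
        using j(3) r_eq[of j] m1 by (simp add: inner_add_right)
      moreover have "aa j + \<tau> j * al - \<tau> j * (al + be) \<le> b"
        using j(3) l_eq[of j] m2 by (simp add: inner_add_right)
      ultimately show ?thesis using j(1) by blast
    qed
    have core: "T * (aa i + \<tau> i * al) - (\<Sum>j\<in>I. \<tau> j * aa j) \<le> (sg + 1) / 2 * T^2 * al"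
      unfolding T_def by (rule real_core[OF fin neI tauI al0 be0 besg sg cover i])
    have "\<tau> i * inner u y \<le> \<tau> i * inner u ymax"
      using ymax(2)[OF y] tauI[OF i] by (intro mult_left_mono) auto
    then have "inner u p \<le> aa i + \<tau> i * al"
      using p r_eq[of i] by (simp add: inner_add_right)
    also have "\<dots> \<le> (1 / T) * (\<Sum>j\<in>I. \<tau> j * aa j) + L * al"
    proof -
      have "T * (aa i + \<tau> i * al) \<le> (\<Sum>j\<in>I. \<tau> j * aa j) + (sg + 1) / 2 * T^2 * al"
        using core by linarith
      then have "aa i + \<tau> i * al \<le> ((\<Sum>j\<in>I. \<tau> j * aa j) + (sg + 1) / 2 * T^2 * al) / T"
        using T0 by (simp add: field_simps)
      also have "\<dots> = (1 / T) * (\<Sum>j\<in>I. \<tau> j * aa j) + L * al"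
        unfolding L_def using T0 by (simp add: field_simps power2_eq_square)
      finally show ?thesis .
    qed
    also have "\<dots> = inner u (t + L *\<^sub>R ymax)"
      unfolding t_def t'_def aa_def al_def
      by (simp add: inner_add_right inner_diff_right inner_sum_right algebra_simps)
    finally have "inner u p \<le> inner u (t + L *\<^sub>R ymax)" .
    moreover have "t + L *\<^sub>R ymax \<in> C" unfolding C_def using ymax(1) by blast
    ultimately show False using sep by fastforce
  qed
  show ?thesis
  proof (intro exI subsetI)
    fix p assume "p \<in> (\<Union>i\<in>{1..n}. (\<lambda>x. c i + \<tau> i *\<^sub>R x) ` K)"
    then obtain i y where "i \<in> I" "y \<in> K" "p = c i + \<tau> i *\<^sub>R y" unfolding I_def by blast
    then have "p \<in> C" by (rule key)
    then show "p \<in> (\<lambda>x. t + ((sg + 1) / 2 * (\<Sum>i=1..n. \<tau> i)) *\<^sub>R x) ` K"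
      unfolding C_def L_def T_def I_def .
  qed
qed


lemma asym_attained:
  fixes K :: "'a::euclidean_space set"
  assumes cb: "convex_body K"
  shows "\<exists>q\<in>K. 1 \<le> asymmetry K \<and> (\<forall>x\<in>K. \<exists>z\<in>K. x - q = - asymmetry K *\<^sub>R (z - q))"
proof -
  have cK: "compact K" and intne: "interior K \<noteq> {}" using cb unfolding convex_body_def by auto
  define A where "A q = {\<mu>::real. \<mu> > 0 \<and> (\<lambda>x. x - q) ` K \<subseteq> (\<lambda>x. - \<mu> *\<^sub>R (x - q)) ` K}" for q
  define sg where "sg = asymmetry K"
  have sg_def': "sg = (INF q\<in>interior K. Inf (A q))" unfolding sg_def asymmetry_def A_def ..
  have Ane: "A q \<noteq> {}" if q: "q \<in> interior K" for q
  proof -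
    obtain e where e: "e > 0" "ball q e \<subseteq> K" using q by (auto simp: mem_interior)
    obtain B where B: "B > 0" "\<And>x. x \<in> K \<Longrightarrow> norm x \<le> B"
      using compact_imp_bounded[OF cK] by (auto simp: bounded_pos)
    define D where "D = B + norm q"
    have D1: "norm (x - q) \<le> D" if "x \<in> K" for x
    proof -
      have "norm (x - q) \<le> norm x + norm q" by (rule norm_triangle_ineq4)
      then show ?thesis using B(2)[OF that] unfolding D_def by linarith
    qed
    have D2: "D > 0" unfolding D_def using B(1) norm_ge_zero[of q] by linarith
    note D = D1 D2
    define mu where "mu = D / e + 1"
    have "D / e > 0" using D2 e(1) by simp
    then have mu0: "mu > 0" unfolding mu_def by linarith
    have "mu \<in> A q" unfolding A_def
    proof (intro CollectI conjI mu0 subsetI)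
      fix v assume "v \<in> (\<lambda>x. x - q) ` K"
      then obtain x where x: "x \<in> K" "v = x - q" by blast
      define z where "z = q - (1 / mu) *\<^sub>R (x - q)"
      have "dist q z = norm (x - q) / mu" unfolding z_def dist_norm using mu0 by simp
      also have "\<dots> \<le> D / mu" using D(1)[OF x(1)] mu0 by (simp add: divide_right_mono)
      also have "\<dots> < e"
      proof -
        have "e * mu = D + e" unfolding mu_def using e(1) by (simp add: field_simps)
        then have "D < e * mu" using e(1) by linarith
        then show ?thesis using mu0 by (simp add: pos_divide_less_eq)
      qed
      finally have "z \<in> K" using e(2) by auto
      moreover have "v = - mu *\<^sub>R (z - q)" unfolding z_def x(2) using mu0 by simp
      ultimately show "v \<in> (\<lambda>x. - mu *\<^sub>R (x - q)) ` K" by blast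
    qed
    then show ?thesis by blast
  qed
  have ge1: "1 \<le> mu" if q: "q \<in> interior K" and mu: "mu \<in> A q" for q mu
  proof -
    have mu0: "mu > 0" and incl: "(\<lambda>x. x - q) ` K \<subseteq> (\<lambda>x. - mu *\<^sub>R (x - q)) ` K"
      using mu unfolding A_def by auto
    obtain e where e: "e > 0" "ball q e \<subseteq> K" using q by (auto simp: mem_interior)
    obtain u :: 'a where u: "u \<in> Basis" using nonempty_Basis by blast
    have Kne: "K \<noteq> {}" using e by auto
    have cont: "continuous_on K (\<lambda>y. inner u y)" by (intro continuous_intros)
    obtain ymax where ymax: "ymax \<in> K" "\<And>y. y \<in> K \<Longrightarrow> inner u y \<le> inner u ymax"
      using continuous_attains_sup[OF cK Kne cont] by blast
    have "q + (e/2) *\<^sub>R u \<in> K" using e u by (intro subsetD[OF e(2)]) (auto simp: dist_norm)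
    then have "inner u (q + (e/2) *\<^sub>R u) \<le> inner u ymax" by (rule ymax(2))
    then have al0: "0 < inner u (ymax - q)" using e u by (simp add: inner_add_right inner_diff_right)
    have step: "\<And>y. y \<in> K \<Longrightarrow> \<exists>z\<in>K. y - q = - mu *\<^sub>R (z - q)" using incl by blast
    obtain z where z: "z \<in> K" "ymax - q = - mu *\<^sub>R (z - q)" using step[OF ymax(1)] by blast
    obtain w where w: "w \<in> K" "z - q = - mu *\<^sub>R (w - q)" using step[OF z(1)] by blast
    have "ymax - q = (mu * mu) *\<^sub>R (w - q)" using z(2) w(2) by simp
    then have "inner u (ymax - q) = (mu * mu) * inner u (w - q)" by simp
    also have "\<dots> \<le> (mu * mu) * inner u (ymax - q)" using ymax(2)[OF w(1)]
      by (intro mult_left_mono) (auto simp: inner_diff_right)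
    finally have "1 \<le> mu * mu" using al0 by simp
    show ?thesis
    proof (rule ccontr)
      assume "\<not> 1 \<le> mu"
      then have "mu * mu < 1 * 1" using mu0 by (intro mult_strict_mono) auto
      then show False using \<open>1 \<le> mu * mu\<close> by simp
    qed
  qed
  have Inf1: "1 \<le> Inf (A q)" if "q \<in> interior K" for q
    by (rule cInf_greatest[OF Ane[OF that]]) (rule ge1[OF that])
  have bddA: "bdd_below (A q)" for q unfolding A_def by (rule bdd_belowI[of _ 0]) auto
  have bddI: "bdd_below ((\<lambda>q. Inf (A q)) ` interior K)" by (rule bdd_belowI[of _ 1]) (auto intro: Inf1)
  have sg1: "1 \<le> sg" unfolding sg_def' by (rule cINF_greatest[OF intne Inf1])
  have approx: "\<exists>q mu. q \<in> interior K \<and> mu \<in> A q \<and> sg \<le> mu \<and> mu < sg + inverse (real (Suc k))" for k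
  proof -
    have "Inf ((\<lambda>q. Inf (A q)) ` interior K) < sg + inverse (real (Suc k))"
      unfolding sg_def' by simp
    then obtain q where q: "q \<in> interior K" "Inf (A q) < sg + inverse (real (Suc k))"
      using cInf_lessD[of "(\<lambda>q. Inf (A q)) ` interior K"] intne by blast
    then obtain mu where mu: "mu \<in> A q" "mu < sg + inverse (real (Suc k))"
      using cInf_lessD[OF Ane[OF q(1)]] by blast
    have "sg \<le> Inf (A q)" unfolding sg_def' by (rule cINF_lower[OF bddI q(1)])
    also have "\<dots> \<le> mu" by (rule cInf_lower[OF mu(1) bddA])
    finally show ?thesis using q mu by blast
  qed
  then have "\<forall>k. \<exists>q. \<exists>mu. q \<in> interior K \<and> mu \<in> A q \<and> sg \<le> mu \<and> mu < sg + inverse (real (Suc k))"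
    by blast
  then have "\<exists>qs. \<forall>k. \<exists>mu. qs k \<in> interior K \<and> mu \<in> A (qs k) \<and> sg \<le> mu \<and> mu < sg + inverse (real (Suc k))"
    by (rule choice)
  then obtain qs where "\<forall>k. \<exists>mu. qs k \<in> interior K \<and> mu \<in> A (qs k) \<and> sg \<le> mu \<and> mu < sg + inverse (real (Suc k))"
    by blast
  then have "\<exists>mus. \<forall>k. qs k \<in> interior K \<and> mus k \<in> A (qs k) \<and> sg \<le> mus k \<and> mus k < sg + inverse (real (Suc k))"
    by (rule choice)
  then obtain mus where QM: "\<And>k. qs k \<in> interior K \<and> mus k \<in> A (qs k) \<and> sg \<le> mus k \<and> mus k < sg + inverse (real (Suc k))"
    by blast
  have qsK: "qs k \<in> K" for k using QM[of k] interior_subset by blast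
  have mus_lim: "mus \<longlonglongrightarrow> sg"
  proof (rule tendsto_sandwich[of "\<lambda>_. sg" mus sequentially "\<lambda>k. sg + inverse (real (Suc k))"])
    show "\<forall>\<^sub>F k in sequentially. sg \<le> mus k" using QM by (intro always_eventually allI) blast
    show "\<forall>\<^sub>F k in sequentially. mus k \<le> sg + inverse (real (Suc k))" using QM by (intro always_eventually allI less_imp_le) blast
    show "(\<lambda>_. sg) \<longlonglongrightarrow> sg" by simp
    show "(\<lambda>k. sg + inverse (real (Suc k))) \<longlonglongrightarrow> sg"
      using tendsto_add[OF tendsto_const LIMSEQ_inverse_real_of_nat, of sg] by simp
  qed
  obtain q r where q: "q \<in> K" and r: "strict_mono r" and qlim: "(qs \<circ> r) \<longlonglongrightarrow> q"
    using seq_compactE[OF compact_imp_seq_compact[OF cK], of qs] qsK by blast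
  have mlim: "(mus \<circ> r) \<longlonglongrightarrow> sg" by (rule LIMSEQ_subseq_LIMSEQ[OF mus_lim r])
  have sym: "\<exists>z\<in>K. x - q = - sg *\<^sub>R (z - q)" if x: "x \<in> K" for x
  proof -
    define zs where "zs k = qs k - (1 / mus k) *\<^sub>R (x - qs k)" for k
    have zsK: "zs k \<in> K" for k
    proof -
      have mu0: "mus k > 0" and incl: "(\<lambda>x. x - qs k) ` K \<subseteq> (\<lambda>x. - mus k *\<^sub>R (x - qs k)) ` K"
        using QM[of k] unfolding A_def by auto
      obtain z where z: "z \<in> K" "x - qs k = - mus k *\<^sub>R (z - qs k)" using incl x by blast
      have "zs k = z" unfolding zs_def z(2) using mu0 by simp
      then show ?thesis using z(1) by simp
    qed
    have sg0: "sg \<noteq> 0" using sg1 by simp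
    have l1: "(\<lambda>k. qs (r k)) \<longlonglongrightarrow> q" using qlim by (simp add: comp_def)
    have l2: "(\<lambda>k. mus (r k)) \<longlonglongrightarrow> sg" using mlim by (simp add: comp_def)
    have l3: "(\<lambda>k. 1 / mus (r k)) \<longlonglongrightarrow> 1 / sg" by (rule tendsto_divide[OF tendsto_const l2 sg0])
    have "(\<lambda>k. zs (r k)) \<longlonglongrightarrow> q - (1 / sg) *\<^sub>R (x - q)"
      unfolding zs_def by (intro tendsto_diff l1 tendsto_scaleR l3 tendsto_const)
    then have zK: "q - (1 / sg) *\<^sub>R (x - q) \<in> K"
      using closed_sequentially[OF compact_imp_closed[OF cK], of "\<lambda>k. zs (r k)"] zsK by blast
    have "x - q = - sg *\<^sub>R ((q - (1 / sg) *\<^sub>R (x - q)) - q)" using sg0 by simp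
    then show ?thesis using zK by blast
  qed
  show ?thesis using q sg1 sym unfolding sg_def by blast
qed

theorem theorem4:
  fixes K :: "'a::euclidean_space set" and n :: nat
    and c :: "nat \<Rightarrow> 'a" and \<tau> :: "nat \<Rightarrow> real"
  assumes "convex_body K"
    and "\<And>i. i \<in> {1..n} \<Longrightarrow> \<tau> i > 0"
    and "non_separable {(\<lambda>x. c i + \<tau> i *\<^sub>R x) ` K | i. i \<in> {1..n}}"
  shows "\<exists>t. (\<Union>i\<in>{1..n}. (\<lambda>x. c i + \<tau> i *\<^sub>R x) ` K)
             \<subseteq> (\<lambda>x. t + ((asymmetry K + 1) / 2 * (\<Sum>i=1..n. \<tau> i)) *\<^sub>R x) ` K"
proof (cases "n = 0")
  case True
  then show ?thesis by simp
next
  case False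
  obtain q where q: "q \<in> K" "1 \<le> asymmetry K" "\<forall>x\<in>K. \<exists>z\<in>K. x - q = - asymmetry K *\<^sub>R (z - q)"
    using asym_attained[OF assms(1)] by blast
  show ?thesis
    by (rule main_geom[OF _ _ q(1) q(2) _ assms(2) _ assms(3)])
       (use assms(1) q(3) False in \<open>auto simp: convex_body_def\<close>)
qed

end
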